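(* Let $N\ge 1$ be the number of users, indexed $1,\dots,N$. For each user $i$ let $\mathbf{x}_i$ be an observed feature vector and let $\phi(\mathbf{x}_i,\ell)\in\mathbb{R}$ be given for $\ell\in\{0,1\}$. For each pair $i<j$ let $\mathbf{z}_{i,j}$ be an observed relationship vector (write $\mathbf{z}_{j,i}=\mathbf{z}_{i,j}$) and let $\psi(\mathbf{z}_{i,j},a,b)\in\mathbb{R}$ be given for $a,b\in\{0,1\}$, where $a$ refers to user $i$ and $b$ to user $j$. Assume: (i) if there is no observed relationship between users $i$ and $j$, then $\psi(\mathbf{z}_{i,j},a,b)=0$ for all $a,b\in\{0,1\}$; (ii) for every pair $i<j$, $\psi(\mathbf{z}_{i,j},1,1)=0\le \psi(\mathbf{z}_{i,j},0,0)\le \psi(\mathbf{z}_{i,j},0,1)$ and $\psi(\mathbf{z}_{i,j},0,0)\le \psi(\mathbf{z}_{i,j},1,0)$. Consider the optimization problem $$\min_{\mathbf{L}\in\{0,1\}^N}\ E(\mathbf{L}),\qquad E(\mathbf{L})=\sum_{i=1}^N\phi(\mathbf{x}_i,\ell_i)+\sum_{i<j}\psi(\mathbf{z}_{i,j},\ell_i,\ell_j).$$ Define the Energy Graph as the directed graph with node set $\{s,t,u_1,\dots,u_N\}$ and edges with capacities: - for each $i$, an edge $(u_i,t)$ with capacity $\phi(\mathbf{x}_i,1)$; - for each $i$, an edge $(s,u_i)$ with capacity $\phi(\mathbf{x}_i,0)+\tfrac12\sum_{j\ne i}\psi(\mathbf{z}_{i,j},0,0)$; - for each pair $i<j$ with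 an observed relationship, edges $(u_i,u_j)$ with capacity $\psi(\mathbf{z}_{i,j},1,0)-\tfrac12\psi(\mathbf{z}_{i,j},0,0)$ and $(u_j,u_i)$ with capacity $\psi(\mathbf{z}_{i,j},0,1)-\tfrac12\psi(\mathbf{z}_{i,j},0,0)$. Then the optimal solutions of the optimization problem correspond exactly to minimum capacity $s$-$t$ cuts of the Energy Graph: if $(S,T)$ is a minimum capacity $s$-$t$ cut and $\mathbf{L}^\star$ is defined by $\ell^\star_i=1$ if $u_i\in S$ and $\ell^\star_i=0$ if $u_i\in T$, then $\mathbf{L}^\star$ minimizes $E$, and the minimum value of $E$ equals the minimum cut capacity.
   Context: This models classification of social media users as in a target location ($\ell_i=1$) or not ($\ell_i=0$); $\phi$ is the "profile energy" and $\psi$ the "link energy". An $s$-$t$ cut is a partition of the node set into $S\ni s$ and $T\ni t$; its capacity is the sum of capacities of all edges directed from a node of $S$ to a node of $T$. *)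

theory Defs
  imports Complex_Main
begin

datatype node = Src | Snk | U nat

text \<open>Symmetric access to relationship vectors: z_{j,i} = z_{i,j}; only z i j with i<j is used.\<close>
definition zsym :: "(nat \<Rightarrow> nat \<Rightarrow> 'z) \<Rightarrow> nat \<Rightarrow> nat \<Rightarrow> 'z" where
  "zsym z i j = (if i < j then z i j else z j i)"

definition pairs :: "nat \<Rightarrow> (nat \<times> nat) set" where
  "pairs N = {(i, j). 1 \<le> i \<and> i < j \<and> j \<le> N}"

definition labelings :: "nat \<Rightarrow> (nat \<Rightarrow> nat) set" where
  "labelings N = {L. \<forall>i\<in>{1..N}. L i \<in> {0, 1}}"

definition energy ::
  "nat \<Rightarrow> (nat \<Rightarrow> 'x) \<Rightarrow> ('x \<Rightarrow> nat \<Rightarrow> real) \<Rightarrow> (nat \<Rightarrow> nat \<Rightarrow> 'z)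
   \<Rightarrow> ('z \<Rightarrow> nat \<Rightarrow> nat \<Rightarrow> real) \<Rightarrow> (nat \<Rightarrow> nat) \<Rightarrow> real" where
  "energy N x \<phi> z \<psi> L =
     (\<Sum>i=1..N. \<phi> (x i) (L i)) + (\<Sum>(i, j)\<in>pairs N. \<psi> (z i j) (L i) (L j))"

definition eg_nodes :: "nat \<Rightarrow> node set" where
  "eg_nodes N = {Src, Snk} \<union> U ` {1..N}"

text \<open>Edge set of the Energy Graph; rel i j (for i<j) means an observed relationship.\<close>
definition eg_edges :: "nat \<Rightarrow> (nat \<Rightarrow> nat \<Rightarrow> bool) \<Rightarrow> (node \<times> node) set" where
  "eg_edges N rel =
     {(U i, Snk) | i. i \<in> {1..N}} \<union> {(Src, U i) | i. i \<in> {1..N}} \<union>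
     {(U i, U j) | i j. (i, j) \<in> pairs N \<and> rel i j} \<union>
     {(U j, U i) | i j. (i, j) \<in> pairs N \<and> rel i j}"

fun eg_cap ::
  "nat \<Rightarrow> (nat \<Rightarrow> 'x) \<Rightarrow> ('x \<Rightarrow> nat \<Rightarrow> real) \<Rightarrow> (nat \<Rightarrow> nat \<Rightarrow> 'z)
   \<Rightarrow> ('z \<Rightarrow> nat \<Rightarrow> nat \<Rightarrow> real) \<Rightarrow> node \<Rightarrow> node \<Rightarrow> real" where
  "eg_cap N x \<phi> z \<psi> (U i) Snk = \<phi> (x i) 1"
| "eg_cap N x \<phi> z \<psi> Src (U i) =
     \<phi> (x i) 0 + 1/2 * (\<Sum>j\<in>{1..N} - {i}. \<psi> (zsym z i j) 0 0)"
| "eg_cap N x \<phi> z \<psi> (U a) (U b) =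
     (if a < b then \<psi> (z a b) 1 0 - 1/2 * \<psi> (z a b) 0 0
      else \<psi> (z b a) 0 1 - 1/2 * \<psi> (z b a) 0 0)"
| "eg_cap N x \<phi> z \<psi> _ _ = 0"

definition is_st_cut :: "nat \<Rightarrow> node set \<Rightarrow> bool" where
  "is_st_cut N S \<longleftrightarrow> S \<subseteq> eg_nodes N \<and> Src \<in> S \<and> Snk \<notin> S"

definition cut_capacity ::
  "nat \<Rightarrow> (nat \<Rightarrow> 'x) \<Rightarrow> ('x \<Rightarrow> nat \<Rightarrow> real) \<Rightarrow> (nat \<Rightarrow> nat \<Rightarrow> 'z)
   \<Rightarrow> ('z \<Rightarrow> nat \<Rightarrow> nat \<Rightarrow> real) \<Rightarrow> (nat \<Rightarrow> nat \<Rightarrow> bool) \<Rightarrow> node set \<Rightarrow> real" where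
  "cut_capacity N x \<phi> z \<psi> rel S =
     (\<Sum>(a, b)\<in>{(a, b)\<in>eg_edges N rel. a \<in> S \<and> b \<in> eg_nodes N - S}. eg_cap N x \<phi> z \<psi> a b)"

definition is_min_cut ::
  "nat \<Rightarrow> (nat \<Rightarrow> 'x) \<Rightarrow> ('x \<Rightarrow> nat \<Rightarrow> real) \<Rightarrow> (nat \<Rightarrow> nat \<Rightarrow> 'z)
   \<Rightarrow> ('z \<Rightarrow> nat \<Rightarrow> nat \<Rightarrow> real) \<Rightarrow> (nat \<Rightarrow> nat \<Rightarrow> bool) \<Rightarrow> node set \<Rightarrow> bool" where
  "is_min_cut N x \<phi> z \<psi> rel S \<longleftrightarrow> is_st_cut N S \<and>
     (\<forall>S'. is_st_cut N S' \<longrightarrow> cut_capacity N x \<phi> z \<psi> rel S \<le> cut_capacity N x \<phi> z \<psi> rel S')"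

end

theory Submission
  imports Defs
begin

lemma pairs_fin: "finite (pairs N)"
  by (rule finite_subset[of _ "{1..N}\<times>{1..N}"]) (auto simp: pairs_def)

lemma dsum:
  fixes f :: "nat \<Rightarrow> nat \<Rightarrow> real"
  shows "(\<Sum>i=1..N. \<Sum>j\<in>{1..N}-{i}. f i j) = (\<Sum>(i,j)\<in>pairs N. f i j + f j i)"
proof -
  have "(\<Sum>i=1..N. \<Sum>j\<in>{1..N}-{i}. f i j) = (\<Sum>p\<in>Sigma {1..N} (\<lambda>i. {1..N}-{i}). f (fst p) (snd p))"
    by (simp add: sum.Sigma split_def)
  also have "Sigma {1..N} (\<lambda>i. {1..N}-{i}) = pairs N \<union> prod.swap ` pairs N"
  proof (rule set_eqI)
    fix p :: "nat \<times> nat"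
    obtain a b where p: "p = (a,b)" by (cases p)
    show "p \<in> Sigma {1..N} (\<lambda>i. {1..N}-{i}) \<longleftrightarrow> p \<in> pairs N \<union> prod.swap ` pairs N"
    proof
      assume "p \<in> Sigma {1..N} (\<lambda>i. {1..N}-{i})"
      then have "a < b \<or> b < a" "a \<in> {1..N}" "b \<in> {1..N}" using p by auto
      then show "p \<in> pairs N \<union> prod.swap ` pairs N"
        using p by (auto simp: pairs_def image_iff)
    next
      assume "p \<in> pairs N \<union> prod.swap ` pairs N"
      then show "p \<in> Sigma {1..N} (\<lambda>i. {1..N}-{i})" using p by (auto simp: pairs_def)
    qed
  qed
  also have "(\<Sum>p\<in>pairs N \<union> prod.swap ` pairs N. f (fst p) (snd p))
      = (\<Sum>p\<in>pairs N. f (fst p) (snd p)) + (\<Sum>p\<in>prod.swap ` pairs N. f (fst p) (snd p))"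
  proof (rule sum.union_disjoint)
    show "pairs N \<inter> prod.swap ` pairs N = {}" by (auto simp: pairs_def)
  qed (auto simp: pairs_fin)
  also have "(\<Sum>p\<in>prod.swap ` pairs N. f (fst p) (snd p)) = (\<Sum>p\<in>pairs N. f (snd p) (fst p))"
    by (subst sum.reindex) auto
  finally show ?thesis by (simp add: sum.distrib split_def)
qed

lemma cut_energy:
  fixes N :: nat and x :: "nat \<Rightarrow> 'x" and \<phi> :: "'x \<Rightarrow> nat \<Rightarrow> real"
    and z :: "nat \<Rightarrow> nat \<Rightarrow> 'z" and \<psi> :: "'z \<Rightarrow> nat \<Rightarrow> nat \<Rightarrow> real"
    and rel :: "nat \<Rightarrow> nat \<Rightarrow> bool" and S :: "node set"
  assumes no_rel: "\<And>i j a b. (i, j) \<in> pairs N \<Longrightarrow> \<not> rel i j \<Longrightarrow> a \<in> {0, 1} \<Longrightarrow> b \<in> {0, 1}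
                 \<Longrightarrow> \<psi> (z i j) a b = 0"
    and psi11: "\<And>i j. (i, j) \<in> pairs N \<Longrightarrow> \<psi> (z i j) 1 1 = 0"
    and cut: "is_st_cut N S"
  shows "cut_capacity N x \<phi> z \<psi> rel S = energy N x \<phi> z \<psi> (\<lambda>i. if U i \<in> S then 1 else 0)"
proof -
  define P where "P = {p\<in>pairs N. rel (fst p) (snd p)}"
  have finP: "finite P" unfolding P_def using pairs_fin by auto
  have SrcS: "Src \<in> S" and SnkS: "Snk \<notin> S" using cut by (auto simp: is_st_cut_def)
  have edges: "eg_edges N rel = (\<lambda>i. (U i, Snk)) ` {1..N} \<union> (\<lambda>i. (Src, U i)) ` {1..N}
      \<union> (\<lambda>(i,j). (U i, U j)) ` P \<union> (\<lambda>(i,j). (U j, U i)) ` P"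
    unfolding eg_edges_def P_def by force
  define g where "g = (\<lambda>(a,b). if a \<in> S \<and> b \<in> eg_nodes N - S then eg_cap N x \<phi> z \<psi> a b else 0)"
  have fin: "finite (eg_edges N rel)" unfolding edges using finP by auto
  have c0: "cut_capacity N x \<phi> z \<psi> rel S = sum g (eg_edges N rel)"
    unfolding cut_capacity_def g_def using fin
    by (simp add: sum.inter_filter[symmetric] split_def case_prod_beta)
  have dis1: "(\<lambda>i. (U i, Snk)) ` {1..N} \<inter> (\<lambda>i. (Src, U i)) ` {1..N} = {}" by auto
  have dis2: "((\<lambda>i. (U i, Snk)) ` {1..N} \<union> (\<lambda>i. (Src, U i)) ` {1..N}) \<inter> (\<lambda>(i,j). (U i, U j)) ` P = {}" by auto
  have dis3: "((\<lambda>i. (U i, Snk)) ` {1..N} \<union> (\<lambda>i. (Src, U i)) ` {1..N} \<union> (\<lambda>(i,j). (U i, U j)) ` P)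
      \<inter> (\<lambda>(i,j). (U j, U i)) ` P = {}" by (auto simp: P_def pairs_def)
  have c1: "sum g (eg_edges N rel) = sum g ((\<lambda>i. (U i, Snk)) ` {1..N}) + sum g ((\<lambda>i. (Src, U i)) ` {1..N})
      + sum g ((\<lambda>(i,j). (U i, U j)) ` P) + sum g ((\<lambda>(i,j). (U j, U i)) ` P)"
    unfolding edges using finP dis1 dis2 dis3
    by (simp add: sum.union_disjoint)
  have s1: "sum g ((\<lambda>i. (U i, Snk)) ` {1..N}) = (\<Sum>i=1..N. if U i \<in> S then \<phi> (x i) 1 else 0)"
    by (subst sum.reindex) (auto simp: inj_on_def g_def eg_nodes_def SnkS intro!: sum.cong)
  have s2: "sum g ((\<lambda>i. (Src, U i)) ` {1..N}) = (\<Sum>i=1..N. if U i \<in> S then 0 else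
       \<phi> (x i) 0 + 1/2 * (\<Sum>j\<in>{1..N}-{i}. \<psi> (zsym z i j) 0 0))"
    by (subst sum.reindex) (auto simp: inj_on_def g_def eg_nodes_def SrcS intro!: sum.cong)
  define h3 where "h3 = (\<lambda>i j. if U i \<in> S \<and> U j \<notin> S then \<psi> (z i j) 1 0 - 1/2 * \<psi> (z i j) 0 0 else 0)"
  define h4 where "h4 = (\<lambda>i j. if U j \<in> S \<and> U i \<notin> S then \<psi> (z i j) 0 1 - 1/2 * \<psi> (z i j) 0 0 else 0)"
  have s3: "sum g ((\<lambda>(i,j). (U i, U j)) ` P) = (\<Sum>(i,j)\<in>P. h3 i j)"
    by (subst sum.reindex) (auto simp: inj_on_def g_def eg_nodes_def P_def pairs_def h3_def
        cut[unfolded is_st_cut_def] intro!: sum.cong)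
  have s4: "sum g ((\<lambda>(i,j). (U j, U i)) ` P) = (\<Sum>(i,j)\<in>P. h4 i j)"
    by (subst sum.reindex) (auto simp: inj_on_def g_def eg_nodes_def P_def pairs_def h4_def
        cut[unfolded is_st_cut_def] intro!: sum.cong)
  define l where "l = (\<lambda>i::nat. if U i \<in> S then 1 else (0::nat))"
  define f where "f = (\<lambda>i j. if U i \<in> S then 0 else \<psi> (zsym z i j) 0 0)"
  have e1: "(\<Sum>i=1..N. \<phi> (x i) (l i)) = (\<Sum>i=1..N. if U i \<in> S then \<phi> (x i) 1 else 0)
       + (\<Sum>i=1..N. if U i \<in> S then 0 else \<phi> (x i) 0)"
    by (auto simp add: sum.distrib[symmetric] l_def intro!: sum.cong)
  have e2: "(\<Sum>i=1..N. if U i \<in> S then 0 else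
       \<phi> (x i) 0 + 1/2 * (\<Sum>j\<in>{1..N}-{i}. \<psi> (zsym z i j) 0 0))
     = (\<Sum>i=1..N. if U i \<in> S then 0 else \<phi> (x i) 0) + 1/2 * (\<Sum>i=1..N. \<Sum>j\<in>{1..N}-{i}. f i j)"
    by (auto simp add: sum.distrib[symmetric] sum_distrib_left f_def intro!: sum.cong)
  have e4: "(\<Sum>(i,j)\<in>pairs N. \<psi> (z i j) (l i) (l j))
      = (\<Sum>(i,j)\<in>pairs N. 1/2 * (f i j + f j i) + (if rel i j then h3 i j + h4 i j else 0))"
  proof (rule sum.cong)
    fix p assume p: "p \<in> pairs N"
    obtain i j where pij: "p = (i,j)" by (cases p)
    have ij: "(i,j) \<in> pairs N" "i < j" using p pij by (auto simp: pairs_def)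
    have zs: "zsym z i j = z i j" "zsym z j i = z i j" using ij by (auto simp: zsym_def)
    show "(case p of (i,j) \<Rightarrow> \<psi> (z i j) (l i) (l j)) =
      (case p of (i,j) \<Rightarrow> 1/2 * (f i j + f j i) + (if rel i j then h3 i j + h4 i j else 0))"
      unfolding pij using no_rel[OF ij(1)] psi11[OF ij(1)]
      by (auto simp: l_def f_def h3_def h4_def zs)
  qed simp
  have e5: "(\<Sum>(i,j)\<in>P. h3 i j) + (\<Sum>(i,j)\<in>P. h4 i j) = (\<Sum>(i,j)\<in>pairs N. if rel i j then h3 i j + h4 i j else 0)"
  proof -
    have "(\<Sum>(i,j)\<in>pairs N. if rel i j then h3 i j + h4 i j else 0)
       = (\<Sum>p\<in>pairs N. if rel (fst p) (snd p) then h3 (fst p) (snd p) else 0)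
        + (\<Sum>p\<in>pairs N. if rel (fst p) (snd p) then h4 (fst p) (snd p) else 0)"
      by (auto simp add: sum.distrib[symmetric] split_def intro!: sum.cong)
    also have "\<dots> = (\<Sum>(i,j)\<in>P. h3 i j) + (\<Sum>(i,j)\<in>P. h4 i j)"
      unfolding P_def using pairs_fin[of N] by (simp add: sum.inter_filter split_def)
    finally show ?thesis by (simp add: split_def)
  qed
  have e6: "(\<Sum>(i,j)\<in>pairs N. 1/2 * (f i j + f j i) + (if rel i j then h3 i j + h4 i j else 0))
     = 1/2 * (\<Sum>(i,j)\<in>pairs N. f i j + f j i) + ((\<Sum>(i,j)\<in>P. h3 i j) + (\<Sum>(i,j)\<in>P. h4 i j))"
  proof -
    have e6a: "(\<Sum>(i,j)\<in>pairs N. 1/2 * (f i j + f j i) + (if rel i j then h3 i j + h4 i j else 0))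
      = (\<Sum>(i,j)\<in>pairs N. 1/2 * (f i j + f j i)) + (\<Sum>(i,j)\<in>pairs N. if rel i j then h3 i j + h4 i j else 0)"
      by (simp only: split_def sum.distrib)
    have e6b: "(\<Sum>(i,j)\<in>pairs N. 1/2 * (f i j + f j i)) = 1/2 * (\<Sum>(i,j)\<in>pairs N. f i j + f j i)"
      by (simp only: split_def sum_distrib_left)
    show ?thesis using e5 e6a e6b by linarith
  qed
  show ?thesis
    unfolding c0 c1 s1 s2 s3 s4 energy_def l_def[symmetric] e1 e2 dsum e4 e6
    by linarith
qed

lemma energy_cong:
  assumes "\<And>i. i \<in> {1..N} \<Longrightarrow> L i = L' i"
  shows "energy N x \<phi> z \<psi> L = energy N x \<phi> z \<psi> L'"
  unfolding energy_def
proof (intro arg_cong2[where f="(+)"] sum.cong refl)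
  fix i assume "i \<in> {1..N}" then show "\<phi> (x i) (L i) = \<phi> (x i) (L' i)" using assms by simp
next
  fix p assume "p \<in> pairs N"
  then show "(case p of (i, j) \<Rightarrow> \<psi> (z i j) (L i) (L j)) = (case p of (i, j) \<Rightarrow> \<psi> (z i j) (L' i) (L' j))"
    using assms by (auto simp: pairs_def)
qed

theorem theorem1:
  fixes N :: nat and x :: "nat \<Rightarrow> 'x" and \<phi> :: "'x \<Rightarrow> nat \<Rightarrow> real"
    and z :: "nat \<Rightarrow> nat \<Rightarrow> 'z" and \<psi> :: "'z \<Rightarrow> nat \<Rightarrow> nat \<Rightarrow> real"
    and rel :: "nat \<Rightarrow> nat \<Rightarrow> bool" and S :: "node set"
  assumes "N \<ge> 1"
    and no_rel: "\<And>i j a b. (i, j) \<in> pairs N \<Longrightarrow> \<not> rel i j \<Longrightarrow> a \<in> {0, 1} \<Longrightarrow> b \<in> {0, 1}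
                 \<Longrightarrow> \<psi> (z i j) a b = 0"
    and psi11: "\<And>i j. (i, j) \<in> pairs N \<Longrightarrow> \<psi> (z i j) 1 1 = 0"
    and psi00: "\<And>i j. (i, j) \<in> pairs N \<Longrightarrow> 0 \<le> \<psi> (z i j) 0 0"
    and psi01: "\<And>i j. (i, j) \<in> pairs N \<Longrightarrow> \<psi> (z i j) 0 0 \<le> \<psi> (z i j) 0 1"
    and psi10: "\<And>i j. (i, j) \<in> pairs N \<Longrightarrow> \<psi> (z i j) 0 0 \<le> \<psi> (z i j) 1 0"
    and mincut: "is_min_cut N x \<phi> z \<psi> rel S"
  shows "(\<lambda>i. if U i \<in> S then 1 else 0) \<in> labelings N
       \<and> (\<forall>L\<in>labelings N. energy N x \<phi> z \<psi> (\<lambda>i. if U i \<in> S then 1 else 0) \<le> energy N x \<phi> z \<psi> L)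
       \<and> energy N x \<phi> z \<psi> (\<lambda>i. if U i \<in> S then 1 else 0) = cut_capacity N x \<phi> z \<psi> rel S"
proof -
  have cut: "is_st_cut N S" using mincut by (simp add: is_min_cut_def)
  have E: "energy N x \<phi> z \<psi> (\<lambda>i. if U i \<in> S then 1 else 0) = cut_capacity N x \<phi> z \<psi> rel S"
    using cut_energy[where N=N and x=x and \<phi>=\<phi> and z=z and \<psi>=\<psi> and rel=rel, OF no_rel psi11 cut] by simp
  have lab: "(\<lambda>i. if U i \<in> S then 1 else 0) \<in> labelings N" by (simp add: labelings_def)
  have opt: "\<forall>L\<in>labelings N. energy N x \<phi> z \<psi> (\<lambda>i. if U i \<in> S then 1 else 0) \<le> energy N x \<phi> z \<psi> L"
  proof
    fix L assume L: "L \<in> labelings N"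
    define S' where "S' = {Src} \<union> U ` {i\<in>{1..N}. L i = 1}"
    have cut': "is_st_cut N S'" by (auto simp: S'_def is_st_cut_def eg_nodes_def)
    have eq: "energy N x \<phi> z \<psi> (\<lambda>i. if U i \<in> S' then 1 else 0) = energy N x \<phi> z \<psi> L"
      by (rule energy_cong) (use L in \<open>auto simp: S'_def labelings_def\<close>)
    have "cut_capacity N x \<phi> z \<psi> rel S \<le> cut_capacity N x \<phi> z \<psi> rel S'"
      using mincut cut' by (simp add: is_min_cut_def)
    also have "\<dots> = energy N x \<phi> z \<psi> L"
      using cut_energy[where N=N and x=x and \<phi>=\<phi> and z=z and \<psi>=\<psi> and rel=rel, OF no_rel psi11 cut'] eq by simp
    finally show "energy N x \<phi> z \<psi> (\<lambda>i. if U i \<in> S then 1 else 0) \<le> energy N x \<phi> z \<psi> L"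
      using E by simp
  qed
  show ?thesis using lab opt E by blast
qed

end
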